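(* Let $R$ be a commutative ring and let $g(x)=\sum_{i\ge0}a_ix^i$ and $h(x)=\sum_{i\ge0}b_ix^i$ be formal power series in $R[[x]]$. Then $$g(x)\,h(x)=\sum_{m=0}^{\infty}x^m\sum_{k=0}^{m}\sigma_k\sum_{j=k}^{m}T(k+m-j,k)\,T(j,k)\Bigl(\sum_{t=j-k}^{j}T(k,j-t)\,\sigma_t\,a_t\Bigr)\Bigl(\sum_{t=j-k}^{j}T(k,j-t)\,\sigma_t\,b_t\Bigr).$$
   Context: For integers $0\le k\le n$, $T(n,k)=1$ if the bitwise AND of the binary expansions of $k$ and $n-k$ is $0$, and $T(n,k)=0$ otherwise (equivalently $T(n,k)=\binom{n}{k}\bmod 2$; this is the Sierpiński triangle, OEIS A047999). For an integer $k\ge0$, $\sigma_k=-1$ if the number of ones in the binary expansion of $k$ is odd and $\sigma_k=1$ otherwise. *)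

theory Defs
  imports Main "HOL-Computational_Algebra.Formal_Power_Series"
begin

definition sierp :: "nat \<Rightarrow> nat \<Rightarrow> int" where
  "sierp n k = (if k \<le> n \<and> and k (n - k) = 0 then 1 else 0)"

fun popcount :: "nat \<Rightarrow> nat" where
  "popcount n = (if n = 0 then 0 else n mod 2 + popcount (n div 2))"

declare popcount.simps[simp del]

definition sgnpc :: "nat \<Rightarrow> int" where
  "sgnpc k = (if odd (popcount k) then -1 else 1)"

end

theory Submission
  imports Defs "HOL-Library.Nat_Bijection"
begin


abbreviation B :: "nat \<Rightarrow> nat set" where "B \<equiv> set_decode"

lemma B_bit: "n \<in> B x \<longleftrightarrow> bit x n"
  by (simp add: set_decode_def bit_iff_odd)

lemma B_and: "B (and x y) = B x \<inter> B y"
  by (auto simp: B_bit bit_and_iff)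

lemma B_eq0: "B x = {} \<longleftrightarrow> x = 0"
  by (metis set_decode_inverse set_decode_zero set_encode_empty)

lemma B_add: "B a \<inter> B d = {} \<Longrightarrow> B (a + d) = B a \<union> B d"
proof -
  assume h: "B a \<inter> B d = {}"
  have "a + d = set_encode (B a) + set_encode (B d)" by simp
  also have "\<dots> = set_encode (B a \<union> B d)"
    unfolding set_encode_def using h by (simp add: sum.union_disjoint)
  finally show ?thesis by simp
qed

lemma B_diff: "B k \<subseteq> B n \<Longrightarrow> B (n - k) = B n - B k"
proof -
  assume h: "B k \<subseteq> B n"
  define d where "d = set_encode (B n - B k)"
  have Bd: "B d = B n - B k" by (simp add: d_def)
  have "B (k + d) = B n" using h by (subst B_add) (auto simp: Bd)
  then have "k + d = n" by (metis set_decode_inverse)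
  then show ?thesis using Bd by auto
qed

lemma sierp_iff: "sierp n k = (if B k \<subseteq> B n then 1 else 0)"
proof -
  have "(k \<le> n \<and> and k (n - k) = 0) \<longleftrightarrow> B k \<subseteq> B n"
  proof
    assume h: "k \<le> n \<and> and k (n - k) = 0"
    then have "B k \<inter> B (n - k) = {}" by (metis B_and B_eq0)
    then have "B (k + (n - k)) = B k \<union> B (n - k)" by (rule B_add)
    then show "B k \<subseteq> B n" using h by simp
  next
    assume h: "B k \<subseteq> B n"
    then have "k \<le> n" by (rule subset_decode_imp_le)
    moreover have "B (and k (n - k)) = {}" using h by (simp add: B_and B_diff)
    ultimately show "k \<le> n \<and> and k (n - k) = 0" by (simp add: B_eq0)
  qed
  then show ?thesis by (simp add: sierp_def)
qed

lemma sierp_disj: "sierp (k + r) k = (if B k \<inter> B r = {} then 1 else 0)"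
  by (simp add: sierp_def B_eq0 flip: B_and)

lemma popcount_card: "popcount n = card (B n)"
proof (induction n rule: less_induct)
  case (less n)
  show ?case
  proof (cases "n = 0")
    case True then show ?thesis by (simp add: popcount.simps)
  next
    case False
    have IH: "popcount (n div 2) = card (B (n div 2))" using less False by simp
    have eq: "B n = (if odd n then insert 0 (Suc ` B (n div 2)) else Suc ` B (n div 2))"
      apply (rule set_eqI)
      subgoal for x by (cases x) auto
      done
    show ?thesis using False IH
      by (subst popcount.simps) (auto simp: eq card_image odd_iff_mod_2_eq_one)
  qed
qed

lemma sgnpc_card: "sgnpc n = (-1) ^ card (B n)"
  by (simp add: sgnpc_def popcount_card)



lemma pow_alt: "finite Y \<Longrightarrow> (\<Sum>W\<in>Pow Y. (-1::int) ^ card W) = (if Y = {} then 1 else 0)"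
proof (induction Y rule: finite_induct)
  case empty then show ?case by simp
next
  case (insert x F)
  have "(\<Sum>W\<in>Pow (insert x F). (-1::int) ^ card W)
      = (\<Sum>W\<in>Pow F. (-1::int) ^ card W) + (\<Sum>W\<in>insert x ` Pow F. (-1::int) ^ card W)"
    unfolding Pow_insert using insert
    by (subst sum.union_disjoint) (auto intro: finite_subset)
  also have "(\<Sum>W\<in>insert x ` Pow F. (-1::int) ^ card W) = (\<Sum>W\<in>Pow F. (-1::int) ^ card (insert x W))"
    using insert by (subst sum.reindex) (auto intro!: inj_onI simp: Pow_def)
  also have "\<dots> = (\<Sum>W\<in>Pow F. - ((-1::int) ^ card W))"
    using insert by (intro sum.cong) (auto simp: card_insert_if finite_subset)
  finally show ?case by (simp add: sum_negf)
qed

lemma setG: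
  assumes "finite X"
  shows "(\<Sum>K | A \<subseteq> K \<and> K \<subseteq> X \<and> K \<inter> R = {}. (-1::int) ^ card K)
       = (if A \<subseteq> X \<and> A \<inter> R = {} \<and> X - A \<subseteq> R then (-1) ^ card A else 0)"
proof (cases "A \<subseteq> X \<and> A \<inter> R = {}")
  case False
  then have e: "{K. A \<subseteq> K \<and> K \<subseteq> X \<and> K \<inter> R = {}} = {}" by blast
  show ?thesis by (subst e) (use False in auto)
next
  case True
  have fA: "finite A" using True assms finite_subset by blast
  have eq: "{K. A \<subseteq> K \<and> K \<subseteq> X \<and> K \<inter> R = {}} = (\<lambda>W. A \<union> W) ` Pow (X - A - R)"
  proof (rule set_eqI, rule iffI)
    fix K assume "K \<in> {K. A \<subseteq> K \<and> K \<subseteq> X \<and> K \<inter> R = {}}"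
    then have "K = A \<union> (K - A)" "K - A \<in> Pow (X - A - R)" by auto
    then show "K \<in> (\<lambda>W. A \<union> W) ` Pow (X - A - R)" by blast
  next
    fix K assume "K \<in> (\<lambda>W. A \<union> W) ` Pow (X - A - R)"
    then show "K \<in> {K. A \<subseteq> K \<and> K \<subseteq> X \<and> K \<inter> R = {}}" using True by auto
  qed
  have inj: "inj_on (\<lambda>W. A \<union> W) (Pow (X - A - R))"
    by (rule inj_onI) blast
  have "(\<Sum>K | A \<subseteq> K \<and> K \<subseteq> X \<and> K \<inter> R = {}. (-1::int) ^ card K)
      = (\<Sum>W\<in>Pow (X - A - R). (-1::int) ^ card (A \<union> W))"
    by (simp only: eq sum.reindex[OF inj] o_def)
  also have "\<dots> = (\<Sum>W\<in>Pow (X - A - R). (-1::int) ^ card A * (-1) ^ card W)"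
  proof (intro sum.cong refl)
    fix W assume "W \<in> Pow (X - A - R)"
    then have "W \<subseteq> X" "A \<inter> W = {}" by auto
    then have "finite W" "A \<inter> W = {}" using assms finite_subset by auto
    then show "(-1::int) ^ card (A \<union> W) = (-1) ^ card A * (-1) ^ card W"
      using fA by (simp add: card_Un_disjoint power_add)
  qed
  also have "\<dots> = (-1) ^ card A * (if X - A - R = {} then 1 else 0)"
    using assms by (simp add: sum_distrib_left[symmetric] pow_alt)
  finally show ?thesis using True by auto
qed

lemma natG:
  assumes "b \<le> N"
  shows "(\<Sum>k=0..N. (if A \<subseteq> B k \<and> B k \<subseteq> B b \<and> B k \<inter> R = {} then (-1::int) ^ card (B k) else 0))
       = (if A \<subseteq> B b \<and> A \<inter> R = {} \<and> B b - A \<subseteq> R then (-1) ^ card A else 0)"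
proof -
  let ?P = "\<lambda>k. A \<subseteq> B k \<and> B k \<subseteq> B b \<and> B k \<inter> R = {}"
  have "(\<Sum>k=0..N. (if ?P k then (-1::int) ^ card (B k) else 0)) = (\<Sum>k\<in>{k\<in>{0..N}. ?P k}. (-1::int) ^ card (B k))"
    by (simp only: sum.inter_filter[OF finite_atLeastAtMost])
  also have "{k\<in>{0..N}. ?P k} = set_encode ` {K. A \<subseteq> K \<and> K \<subseteq> B b \<and> K \<inter> R = {}}"
  proof (rule set_eqI, rule iffI)
    fix k assume "k \<in> {k\<in>{0..N}. ?P k}"
    then have P: "?P k" by simp
    show "k \<in> set_encode ` {K. A \<subseteq> K \<and> K \<subseteq> B b \<and> K \<inter> R = {}}"
      by (rule image_eqI[where x="B k"]) (use P in simp_all)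
  next
    fix k assume "k \<in> set_encode ` {K. A \<subseteq> K \<and> K \<subseteq> B b \<and> K \<inter> R = {}}"
    then obtain K where K: "A \<subseteq> K" "K \<subseteq> B b" "K \<inter> R = {}" "k = set_encode K" by auto
    have fK: "finite K" by (rule finite_subset[OF K(2)]) simp
    then have "B k = K" using K by simp
    moreover have "k \<le> b" using K(2) \<open>B k = K\<close> by (intro subset_decode_imp_le) simp
    then have "k \<le> N" using assms by linarith
    ultimately show "k \<in> {k\<in>{0..N}. ?P k}" using K by auto
  qed
  also have "(\<Sum>k\<in>set_encode ` {K. A \<subseteq> K \<and> K \<subseteq> B b \<and> K \<inter> R = {}}. (-1::int) ^ card (B k))
      = (\<Sum>K | A \<subseteq> K \<and> K \<subseteq> B b \<and> K \<inter> R = {}. (-1::int) ^ card K)"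
  proof (subst sum.reindex)
    show "inj_on set_encode {K. A \<subseteq> K \<and> K \<subseteq> B b \<and> K \<inter> R = {}}"
    proof (rule inj_on_subset[OF inj_on_set_encode], rule subsetI)
      fix K assume "K \<in> {K. A \<subseteq> K \<and> K \<subseteq> B b \<and> K \<inter> R = {}}"
      then have "K \<subseteq> B b" by simp
      then have "finite K" by (rule finite_subset) simp
      then show "K \<in> Collect finite" by simp
    qed
    show "sum ((\<lambda>k. (-1::int) ^ card (B k)) \<circ> set_encode) {K. A \<subseteq> K \<and> K \<subseteq> B b \<and> K \<inter> R = {}} =
        (\<Sum>K | A \<subseteq> K \<and> K \<subseteq> B b \<and> K \<inter> R = {}. (-1) ^ card K)"
    proof (intro sum.cong refl)
      fix K assume "K \<in> {K. A \<subseteq> K \<and> K \<subseteq> B b \<and> K \<inter> R = {}}"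
      then have "K \<subseteq> B b" by simp
      then have "finite K" by (rule finite_subset) simp
      then show "((\<lambda>k. (-1::int) ^ card (B k)) \<circ> set_encode) K = (-1) ^ card K" by simp
    qed
  qed
  also have "\<dots> = (if A \<subseteq> B b \<and> A \<inter> R = {} \<and> B b - A \<subseteq> R then (-1) ^ card A else 0)"
    by (rule setG) simp
  finally show ?thesis .
qed



definition w :: "nat \<Rightarrow> nat \<Rightarrow> nat \<Rightarrow> int" where
  "w k j t = (if j - k \<le> t \<and> t \<le> j then sierp k (j - t) * sgnpc t else 0)"

definition E :: "nat \<Rightarrow> nat \<Rightarrow> nat \<Rightarrow> nat \<Rightarrow> nat \<Rightarrow> int" where
  "E m k j p q = (if k \<le> j then sgnpc k * sierp (k + m - j) k * sierp j k * w k j p * w k j q else 0)"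

definition Dm :: "nat \<Rightarrow> nat \<Rightarrow> nat \<Rightarrow> int" where
  "Dm m p q = (\<Sum>k=0..m. \<Sum>j=0..m. E m k j p q)"

lemma sub_le: "B k \<subseteq> B n \<Longrightarrow> k \<le> n" by (rule subset_decode_imp_le)

lemma term_k:
  assumes "j \<le> m"
  shows "E m k j p q
    = sgnpc p * sgnpc q * (if p \<le> j \<and> q \<le> j then
        (if B (j-p) \<union> B (j-q) \<subseteq> B k \<and> B k \<subseteq> B j \<and> B k \<inter> B (m - j) = {} then (-1) ^ card (B k) else 0) else 0)"
proof -
  have e1: "sierp (k + m - j) k = (if B k \<inter> B (m - j) = {} then 1 else 0)"
    using assms sierp_disj[of k "m - j"] by simp
  have e2: "sierp j k = (if B k \<subseteq> B j then 1 else 0)" by (rule sierp_iff)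
  have e3: "w k j t = (if t \<le> j \<and> B (j - t) \<subseteq> B k then sgnpc t else 0)" for t
  proof -
    have "B (j - t) \<subseteq> B k \<Longrightarrow> j - t \<le> k" by (rule sub_le)
    then show ?thesis unfolding w_def sierp_iff by auto
  qed
  have e4: "B k \<subseteq> B j \<Longrightarrow> k \<le> j" by (rule sub_le)
  show ?thesis unfolding E_def e1 e2 e3 using e4 by (auto simp: sgnpc_card)
qed

lemma inner_k:
  assumes "j \<le> m"
  shows "(\<Sum>k=0..m. E m k j p q)
   = sgnpc p * sgnpc q * (if p \<le> j \<and> q \<le> j then
       (if B (j-p) \<union> B (j-q) \<subseteq> B j \<and> (B (j-p) \<union> B (j-q)) \<inter> B (m-j) = {} \<and> B j - (B (j-p) \<union> B (j-q)) \<subseteq> B (m-j)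
        then (-1) ^ card (B (j-p) \<union> B (j-q)) else 0) else 0)"
proof (cases "p \<le> j \<and> q \<le> j")
  case True
  have "(\<Sum>k=0..m. E m k j p q) = sgnpc p * sgnpc q * (\<Sum>k=0..m.
        (if B (j-p) \<union> B (j-q) \<subseteq> B k \<and> B k \<subseteq> B j \<and> B k \<inter> B (m - j) = {} then (-1) ^ card (B k) else 0))"
    by (simp add: term_k[OF assms] True sum_distrib_left)
  also have "\<dots> = sgnpc p * sgnpc q *
       (if B (j-p) \<union> B (j-q) \<subseteq> B j \<and> (B (j-p) \<union> B (j-q)) \<inter> B (m-j) = {} \<and> B j - (B (j-p) \<union> B (j-q)) \<subseteq> B (m-j)
        then (-1) ^ card (B (j-p) \<union> B (j-q)) else 0)"
    by (subst natG[OF assms]) (rule refl)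
  finally show ?thesis using True by simp
next
  case False
  have "(\<Sum>k=0..m. E m k j p q) = (\<Sum>k=0..m. (0::int))"
    by (intro sum.cong refl) (simp only: term_k[OF assms] if_not_P[OF False] mult_zero_right)
  then show ?thesis by (simp only: if_not_P[OF False] mult_zero_right sum.neutral_const)
qed

lemma sub_diff_iff:
  assumes "p \<le> j"
  shows "B (j - p) \<subseteq> B j \<longleftrightarrow> B p \<subseteq> B j"
proof
  assume h: "B (j - p) \<subseteq> B j"
  have "B (j - (j - p)) = B j - B (j - p)" by (rule B_diff[OF h])
  then show "B p \<subseteq> B j" using assms by auto
next
  assume "B p \<subseteq> B j" then show "B (j - p) \<subseteq> B j" by (simp add: B_diff)
qed

lemma j_simp:
  "sgnpc p * sgnpc q * (if p \<le> j \<and> q \<le> j then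
       (if B (j-p) \<union> B (j-q) \<subseteq> B j \<and> (B (j-p) \<union> B (j-q)) \<inter> R = {} \<and> B j - (B (j-p) \<union> B (j-q)) \<subseteq> R
        then (-1) ^ card (B (j-p) \<union> B (j-q)) else 0) else 0)
   = (-1) ^ card (B p \<union> B q) * (if B p \<union> B q \<subseteq> B j \<and> B j \<inter> R = B p \<inter> B q then (-1) ^ card (B j) else 0)"
proof (cases "B p \<subseteq> B j \<and> B q \<subseteq> B j")
  case True
  then have pj: "p \<le> j" "q \<le> j" by (auto intro: sub_le)
  have A: "B (j-p) \<union> B (j-q) = B j - (B p \<inter> B q)" using True by (auto simp: B_diff)
  have cond: "(B j - (B p \<inter> B q)) \<inter> R = {} \<and> B j - (B j - (B p \<inter> B q)) \<subseteq> R \<longleftrightarrow> B j \<inter> R = B p \<inter> B q"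
    using True by blast
  have c1: "card (B j - (B p \<inter> B q)) = card (B j) - card (B p \<inter> B q)"
    using True by (intro card_Diff_subset) (auto intro: finite_subset)
  have c2: "card (B p) + card (B q) = card (B p \<union> B q) + card (B p \<inter> B q)"
    by (rule card_Un_Int) simp_all
  have c3: "card (B p \<inter> B q) \<le> card (B j)" using True by (intro card_mono) auto
  have sgn: "sgnpc p * sgnpc q * (-1) ^ card (B j - (B p \<inter> B q)) = ((-1) ^ card (B p \<union> B q) * (-1) ^ card (B j) :: int)"
  proof -
    have "card (B p) + card (B q) + card (B j - (B p \<inter> B q)) = card (B p \<union> B q) + card (B j)"
      using c1 c2 c3 by linarith
    then show ?thesis by (simp add: sgnpc_card flip: power_add)
  qed
  show ?thesis using pj True unfolding A cond by (simp add: sgn)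
next
  case False
  then show ?thesis using sub_diff_iff by auto
qed

lemma j_cond:
  assumes "B c \<subseteq> S" "j \<le> m"
  shows "(S \<subseteq> B j \<and> B j \<inter> B (m - j) = B c) \<longleftrightarrow> (c \<le> m \<and> S \<subseteq> B j \<and> B j \<subseteq> B (m - c))"
proof
  assume h: "S \<subseteq> B j \<and> B j \<inter> B (m - j) = B c"
  define r where "r = m - j"
  have cr: "B c \<subseteq> B r" using h r_def by auto
  then have "c \<le> r" by (rule sub_le)
  have Brc: "B (r - c) = B r - B c" by (rule B_diff[OF cr])
  have dis: "B j \<inter> B (r - c) = {}" using h Brc r_def by auto
  define x where "x = j + (r - c)"
  have Bx: "B x = B j \<union> B (r - c)" unfolding x_def by (rule B_add[OF dis])
  have "m = x + c" using \<open>c \<le> r\<close> assms(2) unfolding x_def r_def by linarith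
  then have "c \<le> m" "m - c = x" by auto
  then show "c \<le> m \<and> S \<subseteq> B j \<and> B j \<subseteq> B (m - c)" using h Bx by auto
next
  assume h: "c \<le> m \<and> S \<subseteq> B j \<and> B j \<subseteq> B (m - c)"
  then have jle: "j \<le> m - c" by (intro sub_le) simp
  define r' where "r' = m - c - j"
  have Br': "B r' = B (m - c) - B j" unfolding r'_def by (rule B_diff) (use h in simp)
  have dis: "B r' \<inter> B c = {}" using Br' h assms(1) by auto
  have "m - j = r' + c" unfolding r'_def using jle h by linarith
  then have "B (m - j) = B r' \<union> B c" using B_add[OF dis] by simp
  then show "S \<subseteq> B j \<and> B j \<inter> B (m - j) = B c" using h Br' assms(1) by auto
qed

lemma encode_sum: "set_encode (B p \<union> B q) + and p q = p + q"
proof -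
  have "set_encode (B p \<union> B q) + set_encode (B p \<inter> B q) = set_encode (B p) + set_encode (B q)"
    unfolding set_encode_def by (rule sum.union_inter) simp_all
  moreover have "set_encode (B p \<inter> B q) = and p q" by (simp flip: B_and)
  ultimately show ?thesis by simp
qed

lemma Dm_eq:
  assumes "p \<le> m" "q \<le> m"
  shows "Dm m p q = (if p + q = m then 1 else 0)"
proof -
  define S where "S = B p \<union> B q"
  define c where "c = and p q"
  have Bc: "B c = B p \<inter> B q" unfolding c_def by (rule B_and)
  have cS: "B c \<subseteq> S" unfolding Bc S_def by auto
  have "Dm m p q = (\<Sum>j=0..m. \<Sum>k=0..m. E m k j p q)" unfolding Dm_def by (rule sum.swap)
  also have "\<dots> = (\<Sum>j=0..m. (-1) ^ card S * (if S \<subseteq> B j \<and> B j \<inter> B (m - j) = B c then (-1) ^ card (B j) else 0))"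
    by (intro sum.cong refl) (simp add: inner_k j_simp Bc S_def)
  also have "\<dots> = (\<Sum>j=0..m. (-1) ^ card S * (if c \<le> m then (if S \<subseteq> B j \<and> B j \<subseteq> B (m - c) \<and> B j \<inter> {} = {} then (-1) ^ card (B j) else 0) else 0))"
    by (intro sum.cong refl) (simp add: j_cond[OF cS])
  also have "\<dots> = (-1) ^ card S * (if c \<le> m then (\<Sum>j=0..m. (if S \<subseteq> B j \<and> B j \<subseteq> B (m - c) \<and> B j \<inter> {} = {} then (-1) ^ card (B j) else 0)) else 0)"
    by (simp add: sum_distrib_left)
  also have "\<dots> = (-1) ^ card S * (if c \<le> m then (if S \<subseteq> B (m - c) \<and> S \<inter> {} = {} \<and> B (m - c) - S \<subseteq> {} then (-1) ^ card S else 0) else 0)"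
    by (simp only: natG[of "m - c" m S "{}"] diff_le_self)
  also have "\<dots> = (if c \<le> m \<and> B (m - c) = S then 1 else 0)"
    by (auto simp flip: power_add simp: mult_2[symmetric])
  also have "(c \<le> m \<and> B (m - c) = S) \<longleftrightarrow> p + q = m"
  proof -
    have fS: "finite S" unfolding S_def by simp
    have "B (m - c) = S \<longleftrightarrow> m - c = set_encode S"
      using fS by (metis set_decode_inverse set_encode_inverse)
    moreover have "set_encode S + c = p + q" unfolding S_def c_def by (rule encode_sum)
    ultimately show ?thesis by auto
  qed
  finally show ?thesis .
qed



lemma inner_t:
  fixes a :: "nat \<Rightarrow> 'a::comm_ring_1"
  assumes "k \<le> j" "j \<le> m"
  shows "(\<Sum>t = j - k..j. of_int (sierp k (j - t)) * of_int (sgnpc t) * a t) = (\<Sum>t=0..m. of_int (w k j t) * a t)"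
proof -
  have "(\<Sum>t=0..m. of_int (w k j t) * a t) = (\<Sum>t=0..m. if t \<in> {j-k..j} then of_int (sierp k (j - t)) * of_int (sgnpc t) * a t else 0)"
    by (intro sum.cong refl) (simp add: w_def)
  also have "\<dots> = (\<Sum>t \<in> {0..m} \<inter> {j-k..j}. of_int (sierp k (j - t)) * of_int (sgnpc t) * a t)"
    by (simp only: sum.inter_restrict[OF finite_atLeastAtMost, symmetric])
  also have "{0..m} \<inter> {j-k..j} = {j-k..j}" using assms by auto
  finally show ?thesis by simp
qed

lemma range_j:
  fixes F :: "nat \<Rightarrow> 'a::comm_ring_1"
  shows "(\<Sum>j=k..m. F j) = (\<Sum>j=0..m. if k \<le> j then F j else 0)"
proof -
  have "(\<Sum>j=0..m. if k \<le> j then F j else 0) = (\<Sum>j=0..m. if j \<in> {k..} then F j else 0)" by simp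
  also have "\<dots> = (\<Sum>j\<in>{0..m} \<inter> {k..}. F j)" by (simp only: sum.inter_restrict[OF finite_atLeastAtMost, symmetric])
  also have "{0..m} \<inter> {k..} = {k..m}" by auto
  finally show ?thesis by simp
qed

lemma range_j2:
  fixes F :: "nat \<Rightarrow> 'a::comm_ring_1"
  shows "c * (\<Sum>j=k..m. F j) = (\<Sum>j=0..m. if k \<le> j then c * F j else 0)"
proof -
  have "c * (\<Sum>j=k..m. F j) = c * (\<Sum>j=0..m. if k \<le> j then F j else 0)" by (simp only: range_j[of F k m])
  also have "\<dots> = (\<Sum>j=0..m. c * (if k \<le> j then F j else 0))" by (rule sum_distrib_left)
  also have "\<dots> = (\<Sum>j=0..m. if k \<le> j then c * F j else 0)" by (intro sum.cong refl) simp
  finally show ?thesis .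
qed

lemma coeff_expand:
  fixes a b :: "nat \<Rightarrow> 'a::comm_ring_1"
  shows "(\<Sum>k = 0..m. of_int (sgnpc k) *
            (\<Sum>j = k..m. of_int (sierp (k + m - j) k) * of_int (sierp j k) *
               (\<Sum>t = j - k..j. of_int (sierp k (j - t)) * of_int (sgnpc t) * a t) *
               (\<Sum>t = j - k..j. of_int (sierp k (j - t)) * of_int (sgnpc t) * b t)))
   = (\<Sum>k=0..m. \<Sum>j=0..m. \<Sum>p=0..m. \<Sum>q=0..m. of_int (E m k j p q) * (a p * b q))"
proof (intro sum.cong refl)
  fix k assume "k \<in> {0..m}"
  have "of_int (sgnpc k) *
            (\<Sum>j = k..m. of_int (sierp (k + m - j) k) * of_int (sierp j k) *
               (\<Sum>t = j - k..j. of_int (sierp k (j - t)) * of_int (sgnpc t) * a t) *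
               (\<Sum>t = j - k..j. of_int (sierp k (j - t)) * of_int (sgnpc t) * b t))
     = (\<Sum>j = 0..m. if k \<le> j then of_int (sgnpc k) * (of_int (sierp (k + m - j) k) * of_int (sierp j k) *
               (\<Sum>t = j - k..j. of_int (sierp k (j - t)) * of_int (sgnpc t) * a t) *
               (\<Sum>t = j - k..j. of_int (sierp k (j - t)) * of_int (sgnpc t) * b t)) else 0)"
    by (simp only: range_j2[of "of_int (sgnpc k)" _ k m])
  also have "\<dots> = (\<Sum>j=0..m. \<Sum>p=0..m. \<Sum>q=0..m. of_int (E m k j p q) * (a p * b q))"
  proof (intro sum.cong refl)
    fix j assume j: "j \<in> {0..m}"
    show "(if k \<le> j then of_int (sgnpc k) * (of_int (sierp (k + m - j) k) * of_int (sierp j k) *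
               (\<Sum>t = j - k..j. of_int (sierp k (j - t)) * of_int (sgnpc t) * a t) *
               (\<Sum>t = j - k..j. of_int (sierp k (j - t)) * of_int (sgnpc t) * b t)) else 0)
        = (\<Sum>p=0..m. \<Sum>q=0..m. of_int (E m k j p q) * (a p * b q))"
    proof (cases "k \<le> j")
      case True
      have jm: "j \<le> m" using j by simp
      note i1 = inner_t[OF True jm, of a] and i2 = inner_t[OF True jm, of b]
      have "of_int (sgnpc k) * (of_int (sierp (k + m - j) k) * of_int (sierp j k) *
               (\<Sum>t = j - k..j. of_int (sierp k (j - t)) * of_int (sgnpc t) * a t) *
               (\<Sum>t = j - k..j. of_int (sierp k (j - t)) * of_int (sgnpc t) * b t))
          = of_int (sgnpc k * sierp (k + m - j) k * sierp j k) * ((\<Sum>p=0..m. of_int (w k j p) * a p) * (\<Sum>q=0..m. of_int (w k j q) * b q))"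
        unfolding i1 i2 by (simp only: of_int_mult mult.assoc)
      also have "\<dots> = (\<Sum>p=0..m. \<Sum>q=0..m. of_int (sgnpc k * sierp (k + m - j) k * sierp j k) * ((of_int (w k j p) * a p) * (of_int (w k j q) * b q)))"
        by (subst sum_product) (simp only: sum_distrib_left)
      also have "\<dots> = (\<Sum>p=0..m. \<Sum>q=0..m. of_int (E m k j p q) * (a p * b q))"
        by (intro sum.cong refl) (simp only: E_def if_P[OF True] of_int_mult mult.assoc mult.left_commute)
      finally show ?thesis by (simp only: if_P[OF True])
    next
      case False
      show ?thesis by (simp only: E_def if_not_P[OF False] of_int_0 mult_zero_left sum.neutral_const)
    qed
  qed
  finally show "of_int (sgnpc k) *
            (\<Sum>j = k..m. of_int (sierp (k + m - j) k) * of_int (sierp j k) *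
               (\<Sum>t = j - k..j. of_int (sierp k (j - t)) * of_int (sgnpc t) * a t) *
               (\<Sum>t = j - k..j. of_int (sierp k (j - t)) * of_int (sgnpc t) * b t))
     = (\<Sum>j=0..m. \<Sum>p=0..m. \<Sum>q=0..m. of_int (E m k j p q) * (a p * b q))" .
qed

lemma swap4:
  fixes f :: "nat \<Rightarrow> nat \<Rightarrow> nat \<Rightarrow> nat \<Rightarrow> 'a::comm_ring_1"
  shows "(\<Sum>k\<in>I. \<Sum>j\<in>I. \<Sum>p\<in>I. \<Sum>q\<in>I. f k j p q) = (\<Sum>p\<in>I. \<Sum>q\<in>I. \<Sum>k\<in>I. \<Sum>j\<in>I. f k j p q)"
proof -
  have "(\<Sum>k\<in>I. \<Sum>j\<in>I. \<Sum>p\<in>I. \<Sum>q\<in>I. f k j p q) = (\<Sum>k\<in>I. \<Sum>p\<in>I. \<Sum>j\<in>I. \<Sum>q\<in>I. f k j p q)"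
    by (rule sum.cong[OF refl], rule sum.swap)
  also have "\<dots> = (\<Sum>p\<in>I. \<Sum>k\<in>I. \<Sum>j\<in>I. \<Sum>q\<in>I. f k j p q)" by (rule sum.swap)
  also have "\<dots> = (\<Sum>p\<in>I. \<Sum>k\<in>I. \<Sum>q\<in>I. \<Sum>j\<in>I. f k j p q)"
    by (rule sum.cong[OF refl], rule sum.cong[OF refl], rule sum.swap)
  also have "\<dots> = (\<Sum>p\<in>I. \<Sum>q\<in>I. \<Sum>k\<in>I. \<Sum>j\<in>I. f k j p q)"
    by (rule sum.cong[OF refl], rule sum.swap)
  finally show ?thesis .
qed

theorem mainTheorem5:
  fixes g h :: "'a :: comm_ring_1 fps"
  shows "g * h = Abs_fps (\<lambda>m. \<Sum>k = 0..m. of_int (sgnpc k) *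
            (\<Sum>j = k..m. of_int (sierp (k + m - j) k) * of_int (sierp j k) *
               (\<Sum>t = j - k..j. of_int (sierp k (j - t)) * of_int (sgnpc t) * fps_nth g t) *
               (\<Sum>t = j - k..j. of_int (sierp k (j - t)) * of_int (sgnpc t) * fps_nth h t)))"
proof (rule fps_ext)
  fix m
  let ?a = "fps_nth g" and ?b = "fps_nth h"
  have "fps_nth (Abs_fps (\<lambda>m. \<Sum>k = 0..m. of_int (sgnpc k) *
            (\<Sum>j = k..m. of_int (sierp (k + m - j) k) * of_int (sierp j k) *
               (\<Sum>t = j - k..j. of_int (sierp k (j - t)) * of_int (sgnpc t) * fps_nth g t) *
               (\<Sum>t = j - k..j. of_int (sierp k (j - t)) * of_int (sgnpc t) * fps_nth h t)))) m
     = (\<Sum>k=0..m. \<Sum>j=0..m. \<Sum>p=0..m. \<Sum>q=0..m. of_int (E m k j p q) * (?a p * ?b q))"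
    by (simp only: fps_nth_Abs_fps coeff_expand)
  also have "\<dots> = (\<Sum>p=0..m. \<Sum>q=0..m. \<Sum>k=0..m. \<Sum>j=0..m. of_int (E m k j p q) * (?a p * ?b q))"
    by (rule swap4)
  also have "\<dots> = (\<Sum>p=0..m. \<Sum>q=0..m. of_int (Dm m p q) * (?a p * ?b q))"
    by (simp only: Dm_def of_int_sum sum_distrib_right)
  also have "\<dots> = (\<Sum>p=0..m. \<Sum>q=0..m. if q = m - p then ?a p * ?b q else 0)"
    by (intro sum.cong refl) (auto simp: Dm_eq)
  also have "\<dots> = (\<Sum>p=0..m. ?a p * ?b (m - p))"
    by (intro sum.cong refl) (simp add: sum.delta)
  also have "\<dots> = fps_nth (g * h) m" by (simp add: fps_mult_nth)
  finally show "fps_nth (g * h) m = fps_nth (Abs_fps (\<lambda>m. \<Sum>k = 0..m. of_int (sgnpc k) *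
            (\<Sum>j = k..m. of_int (sierp (k + m - j) k) * of_int (sierp j k) *
               (\<Sum>t = j - k..j. of_int (sierp k (j - t)) * of_int (sgnpc t) * fps_nth g t) *
               (\<Sum>t = j - k..j. of_int (sierp k (j - t)) * of_int (sgnpc t) * fps_nth h t)))) m" by (rule sym)
qed

end
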